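(* Let $p>1$, $\beta=1/(p-1)$, $\gamma=\frac{p-2}{2(p-1)}$, $\sigma\in\{-1,1\}$, and $A>0$. Let $\phi\in C^2([A,\infty))$ be a solution of $$\sigma\phi''=\tfrac12 y\phi'-\gamma\phi-|\phi'|^p\quad\text{on }[A,\infty)$$ such that, for some $C>0$, $\phi'(y)\ge Cy^\beta$ for all $y\ge A$, and $|\phi''(y)|=o(y^{\beta+1})$ as $y\to\infty$. Then $$\lim_{y\to\infty}\frac{\phi(y)}{y^{\beta+1}}=L:=\frac{p^{-\beta}}{\beta+1}.$$ *)

theory Defs
  imports "HOL-Analysis.Analysis"
begin

end

theory Submission
  imports Defs
begin

lemma powr_mvt:
  fixes p a b :: real
  assumes p: "1 \<le> p" and a: "0 < a" and ab: "a \<le> b"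
  shows "p * a powr (p-1) * (b-a) \<le> b powr p - a powr p \<and> b powr p - a powr p \<le> p * b powr (p-1) * (b-a)"
proof (cases "a = b")
  case True then show ?thesis by simp
next
  case False
  then have lt: "a < b" using ab by simp
  have "\<exists>z. a < z \<and> z < b \<and> (b powr p - a powr p = (b - a) * (p * z powr (p-1)))"
    by (rule MVT2[OF lt]) (rule has_real_derivative_powr, use a in auto)
  then obtain z where z: "a < z" "z < b" "b powr p - a powr p = (b - a) * (p * z powr (p-1))" by blast
  have "a powr (p-1) \<le> z powr (p-1)" using z a p by (intro powr_mono2) auto
  moreover have "z powr (p-1) \<le> b powr (p-1)" using z a p by (intro powr_mono2) auto
  ultimately show ?thesis using z lt p
    by (auto intro!: mult_left_mono mult_right_mono simp: mult.commute mult.left_commute)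
qed

lemma log_decr:
  fixes f f' :: "real \<Rightarrow> real"
  assumes Y: "Y > 0" and d: "\<And>y. y \<ge> Y \<Longrightarrow> (f has_real_derivative f' y) (at y)"
    and b: "\<And>y. y \<ge> Y \<Longrightarrow> f' y \<le> - \<eta> / y" and y: "y \<ge> Y"
  shows "f y \<le> f Y - \<eta> * (ln y - ln Y)"
proof -
  let ?g = "\<lambda>x. f x + \<eta> * ln x"
  have "?g y \<le> ?g Y"
  proof (rule DERIV_nonpos_imp_nonincreasing[OF y])
    fix x assume x: "Y \<le> x" "x \<le> y"
    have "(?g has_real_derivative f' x + \<eta> * (1/x)) (at x)"
      using x Y by (auto intro!: derivative_eq_intros d)
    moreover have "f' x + \<eta> * (1/x) \<le> 0" using b[of x] x by simp
    ultimately show "\<exists>y. (?g has_real_derivative y) (at x) \<and> y \<le> 0" by blast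
  qed
  then show ?thesis by (simp add: algebra_simps)
qed

lemma trap_down:
  fixes f f' :: "real \<Rightarrow> real"
  assumes Y: "Y > 0" and d: "\<And>y. y \<ge> Y \<Longrightarrow> (f has_real_derivative f' y) (at y)"
    and a: "\<And>y. y \<ge> Y \<Longrightarrow> f y \<ge> T \<Longrightarrow> f' y < 0"
    and b: "\<And>M. \<exists>\<eta>>0. \<exists>Y'. \<forall>y\<ge>Y'. T \<le> f y \<and> f y \<le> M \<longrightarrow> f' y \<le> - \<eta> / y"
  shows "\<exists>Y'. \<forall>y\<ge>Y'. f y \<le> T"
proof (cases "\<exists>y1\<ge>Y. f y1 \<le> T")
  case True
  then obtain y1 where y1: "y1 \<ge> Y" "f y1 \<le> T" by blast
  have "\<forall>y\<ge>y1. f y \<le> T"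
  proof (rule ccontr)
    assume "\<not> ?thesis"
    then obtain y2 where y2: "y2 \<ge> y1" "f y2 > T" by force
    define S where "S = {t \<in> {y1..y2}. f t \<le> T}"
    have cont: "continuous_on {y1..y2} f"
    proof (intro continuous_at_imp_continuous_on ballI)
      fix x assume "x \<in> {y1..y2}"
      then have "Y \<le> x" using y1 by auto
      then show "isCont f x" using d DERIV_isCont by blast
    qed
    have cS: "closed S" unfolding S_def
      by (rule continuous_on_closed_Collect_le[OF cont continuous_on_const]) simp
    have "y1 \<in> S" using y1 y2 by (simp add: S_def)
    moreover have "bdd_above S" unfolding S_def by (rule bdd_aboveI[of _ y2]) auto
    ultimately have sS: "Sup S \<in> S" using cS closed_contains_Sup by blast
    define s where "s = Sup S"
    have s1: "y1 \<le> s" "s \<le> y2" "f s \<le> T" using sS by (auto simp: S_def s_def)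
    have "s < y2" using s1 y2 by (cases "s = y2") auto
    then obtain z where z: "s < z" "z < y2" "f y2 - f s = (y2 - s) * f' z"
      using MVT2[of s y2 f f'] d s1 y1 by auto
    have "f z > T"
    proof (rule ccontr)
      assume "\<not> f z > T"
      then have "z \<in> S" using z s1 by (auto simp: S_def)
      then have "z \<le> s" unfolding s_def using \<open>bdd_above S\<close> by (rule cSup_upper)
      then show False using z by simp
    qed
    then have "f' z < 0" using a[of z] z s1 y1 by auto
    then have "(y2 - s) * f' z < 0" using \<open>s < y2\<close> by (simp add: mult_pos_neg)
    then show False using z s1 y2 by linarith
  qed
  then show ?thesis by blast
next
  case False
  then have gt: "\<And>y. y \<ge> Y \<Longrightarrow> f y > T" by force
  have dec: "f y \<le> f Y" if "y \<ge> Y" for y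
  proof (rule DERIV_nonpos_imp_nonincreasing[OF that])
    fix x assume "Y \<le> x" "x \<le> y"
    then show "\<exists>y. (f has_real_derivative y) (at x) \<and> y \<le> 0"
      using d[of x] a[of x] gt[of x] by (intro exI[of _ "f' x"]) auto
  qed
  obtain \<eta> Y' where eta: "\<eta> > 0" "\<And>y. y \<ge> Y' \<Longrightarrow> T \<le> f y \<and> f y \<le> f Y \<longrightarrow> f' y \<le> - \<eta> / y"
    using b[of "f Y"] by blast
  define Y2 where "Y2 = max Y Y'"
  have Y2: "Y2 \<ge> Y" "Y2 \<ge> Y'" "Y2 > 0" using Y by (auto simp: Y2_def)
  have bnd: "f y \<le> f Y2 - \<eta> * (ln y - ln Y2)" if "y \<ge> Y2" for y
  proof (rule log_decr[OF Y2(3) _ _ that])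
    fix x assume "x \<ge> Y2"
    then show "(f has_real_derivative f' x) (at x)" using d Y2 by auto
    show "f' x \<le> - \<eta> / x" using eta(2)[of x] gt[of x] dec[of x] \<open>x \<ge> Y2\<close> Y2 by auto
  qed
  define y where "y = exp (ln Y2 + (f Y2 - T) / \<eta> + 1)"
  have "(f Y2 - T) / \<eta> \<ge> 0" using gt[of Y2] Y2 eta by auto
  then have "ln y \<ge> ln Y2" by (simp add: y_def)
  moreover have "y > 0" by (simp add: y_def)
  ultimately have yY: "y \<ge> Y2" using Y2 ln_le_cancel_iff by blast
  have "\<eta> * (ln y - ln Y2) = f Y2 - T + \<eta>" using eta by (simp add: y_def field_simps)
  then have "f y \<le> T - \<eta>" using bnd[OF yY] by linarith
  then show ?thesis using gt[of y] yY Y2 eta by auto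
qed

lemma trap_up:
  fixes f f' :: "real \<Rightarrow> real"
  assumes Y: "Y > 0" and d: "\<And>y. y \<ge> Y \<Longrightarrow> (f has_real_derivative f' y) (at y)"
    and a: "\<And>y. y \<ge> Y \<Longrightarrow> f y \<le> T \<Longrightarrow> f' y > 0"
    and b: "\<And>M. \<exists>\<eta>>0. \<exists>Y'. \<forall>y\<ge>Y'. M \<le> f y \<and> f y \<le> T \<longrightarrow> f' y \<ge> \<eta> / y"
  shows "\<exists>Y'. \<forall>y\<ge>Y'. f y \<ge> T"
proof -
  have "\<exists>Y'. \<forall>y\<ge>Y'. (\<lambda>x. - f x) y \<le> -T"
  proof (rule trap_down[OF Y, where f' = "\<lambda>x. - f' x"])
    fix y assume "y \<ge> Y" then show "((\<lambda>x. - f x) has_real_derivative - f' y) (at y)"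
      using d by (auto intro!: derivative_eq_intros)
  next
    fix y assume "y \<ge> Y" "-T \<le> - f y" then show "- f' y < 0" using a by auto
  next
    fix M
    obtain \<eta> Y' where "\<eta> > 0" "\<forall>y\<ge>Y'. -M \<le> f y \<and> f y \<le> T \<longrightarrow> f' y \<ge> \<eta> / y"
      using b[of "-M"] by blast
    then show "\<exists>\<eta>>0. \<exists>Y'. \<forall>y\<ge>Y'. - T \<le> - f y \<and> - f y \<le> M \<longrightarrow> - f' y \<le> - \<eta> / y"
      by (intro exI[of _ \<eta>] conjI exI[of _ Y']) auto
  qed
  then show ?thesis by auto
qed


lemma pw: "(x::real) > 0 \<Longrightarrow> x powr p = x * x powr (p-1)"
proof -
  assume x: "x > 0"
  have "x powr p = x powr (1 + (p-1))" by simp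
  also have "\<dots> = x powr 1 * x powr (p-1)" by (rule powr_add)
  finally show ?thesis using x by simp
qed

lemma kid: "(p::real) > 1 \<Longrightarrow> x/2 - x powr p - (p-2)/(2*p) * x = x/p - x powr p"
  by (simp add: field_simps)

lemma ident: "(a::real)/2 - a powr p - g = (a - x)/2 + (x powr p - a powr p) + (x/2 - x powr p - g)"
  by (simp add: diff_divide_distrib)
lemma ident2: "(a::real)/2 - a powr p - g = (a - x)/2 - (a powr p - x powr p) + (x/2 - x powr p - g)"
  by (simp add: diff_divide_distrib)

lemma h_up:
  fixes p T x :: real
  assumes p: "p > 1" and T: "T > 0" "1/p < T powr (p-1)" and x: "x \<ge> T"
  shows "x/p - x powr p \<le> - (T * (T powr (p-1) - 1/p))"
proof -
  have xp: "x powr (p-1) \<ge> T powr (p-1)" using x T p by (intro powr_mono2) auto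
  have "x/p - x powr p = x * (1/p - x powr (p-1))" using pw[of x p] x T by (simp add: algebra_simps)
  also have "\<dots> \<le> x * (1/p - T powr (p-1))" using xp x T by (intro mult_left_mono) auto
  also have "\<dots> \<le> T * (1/p - T powr (p-1))" using x T by (intro mult_right_mono_neg) auto
  finally show ?thesis by (simp add: algebra_simps)
qed

lemma h_lo:
  fixes p T x m :: real
  assumes p: "p > 1" and m: "m > 0" "m \<le> x" and T: "x \<le> T" "T powr (p-1) < 1/p"
  shows "x/p - x powr p \<ge> m * (1/p - T powr (p-1))"
proof -
  have xp: "x powr (p-1) \<le> T powr (p-1)" using m T p by (intro powr_mono2) auto
  have "m * (1/p - T powr (p-1)) \<le> x * (1/p - T powr (p-1))" using m T by (intro mult_right_mono) auto
  also have "\<dots> \<le> x * (1/p - x powr (p-1))" using xp m by (intro mult_left_mono) auto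
  also have "\<dots> = x/p - x powr p" using pw[of x p] m by (simp add: algebra_simps)
  finally show ?thesis .
qed

lemma up_a:
  fixes p T x a :: real
  assumes p: "p > 1" and T: "T > 0" "1/p < T powr (p-1)" and x: "x \<ge> T" and a: "a \<ge> x"
  and G: "G = (p-2)/(2*p) * x"
  shows "a/2 - a powr p - G \<le> - (T * (T powr (p-1) - 1/p))"
proof -
  have xp: "x powr (p-1) \<ge> T powr (p-1)" using x T p by (intro powr_mono2) auto
  have "p * x powr (p-1) * (a-x) \<le> a powr p - x powr p" using powr_mvt[of p x a] p x T a by auto
  moreover have "a - x \<le> p * x powr (p-1) * (a-x)"
  proof -
    have "p * T powr (p-1) \<le> p * x powr (p-1)" using xp p by simp
    moreover have "1 < p * T powr (p-1)" using T p by (simp add: field_simps)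
    ultimately have "1 \<le> p * x powr (p-1)" by linarith
    then show ?thesis using a mult_right_mono[of 1 "p * x powr (p-1)" "a-x"] by auto
  qed
  ultimately have "a - x \<le> a powr p - x powr p" by linarith
  then have "a/2 - a powr p \<le> x/2 - x powr p" using a by linarith
  then have "a/2 - a powr p - G \<le> x/p - x powr p" using kid[OF p, of x, folded G] by linarith
  also have "\<dots> \<le> - (T * (T powr (p-1) - 1/p))" by (rule h_up[OF p T x])
  finally show ?thesis .
qed

lemma up_b:
  fixes p T x a M c \<eta> :: real
  assumes p: "p > 1" and T: "T > 0" "1/p < T powr (p-1)" and x: "T \<le> x" "x \<le> M"
    and a: "0 < a" "a < x" "x - a < \<eta>" and c: "c = T * (T powr (p-1) - 1/p)"
    and eta: "\<eta> \<le> c / (2 * p * M powr (p-1))"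
  and G: "G = (p-2)/(2*p) * x"
  shows "a/2 - a powr p - G \<le> - c/2"
proof -
  have Mp: "M powr (p-1) > 0" using x T by simp
  have "x powr p - a powr p \<le> p * x powr (p-1) * (x - a)" using powr_mvt[of p a x] p a by simp
  also have "\<dots> \<le> p * M powr (p-1) * \<eta>"
  proof -
    have "x powr (p-1) \<le> M powr (p-1)" using a x p T by (intro powr_mono2) auto
    then have "p * x powr (p-1) \<le> p * M powr (p-1)" using p by simp
    then show ?thesis using a p Mp by (intro mult_mono) auto
  qed
  also have "\<dots> \<le> p * M powr (p-1) * (c / (2 * p * M powr (p-1)))"
    using eta p Mp by (intro mult_left_mono) auto
  also have "\<dots> = c/2" using p Mp by (simp add: field_simps)
  finally have 1: "x powr p - a powr p \<le> c/2" .
  have "a/2 - a powr p - G = (a - x)/2 + (x powr p - a powr p) + (x/2 - x powr p - G)"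
    by (rule ident)
  also have "\<dots> \<le> c/2 + (x/p - x powr p)" using 1 a kid[OF p, of x, folded G] by argo
  also have "\<dots> \<le> c/2 - c" using h_up[OF p T x(1)] c by linarith
  finally show ?thesis by argo
qed

lemma lo_dich:
  fixes p T x a m c :: real
  assumes p: "p > 1" and m: "m > 0" "m \<le> x" and T: "x \<le> T" "T powr (p-1) < 1/p"
    and c: "c = m * (1/p - T powr (p-1))" and a: "0 < a" "x - c < a" "a \<le> x"
  and G: "G = (p-2)/(2*p) * x"
  shows "a/2 - a powr p - G > c/2"
proof -
  have "a powr p \<le> x powr p" using a p by (intro powr_mono2) auto
  have "a/2 - a powr p - G = (a - x)/2 + (x powr p - a powr p) + (x/2 - x powr p - G)"
    by (rule ident)
  also have "\<dots> > -c/2 + (x/p - x powr p)" using \<open>a powr p \<le> x powr p\<close> a kid[OF p, of x, folded G] by argo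
  finally show ?thesis using h_lo[OF p m T] c by linarith
qed

lemma lo_b:
  fixes p T x a m c \<eta> :: real
  assumes p: "p > 1" and m: "m > 0" "m \<le> x" and T: "x \<le> T" "T powr (p-1) < 1/p"
    and c: "c = m * (1/p - T powr (p-1))" and a: "x < a" "a < x + \<eta>"
    and eta: "\<eta> \<le> 1" "\<eta> \<le> c / (2 * p * (T+1) powr (p-1))"
  and G: "G = (p-2)/(2*p) * x"
  shows "a/2 - a powr p - G \<ge> c/2"
proof -
  have Mp: "(T+1) powr (p-1) > 0" using m T by simp
  have "a powr p - x powr p \<le> p * a powr (p-1) * (a - x)" using powr_mvt[of p x a] p a m by simp
  also have "\<dots> \<le> p * (T+1) powr (p-1) * \<eta>"
  proof -
    have "a powr (p-1) \<le> (T+1) powr (p-1)" using a m T eta p by (intro powr_mono2) auto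
    then have "p * a powr (p-1) \<le> p * (T+1) powr (p-1)" using p by simp
    then show ?thesis using a p Mp by (intro mult_mono) auto
  qed
  also have "\<dots> \<le> p * (T+1) powr (p-1) * (c / (2 * p * (T+1) powr (p-1)))"
    using eta p Mp by (intro mult_left_mono) auto
  also have "\<dots> = c/2" using p Mp by (simp add: field_simps)
  finally have 1: "a powr p - x powr p \<le> c/2" .
  have "a/2 - a powr p - G = (a - x)/2 - (a powr p - x powr p) + (x/2 - x powr p - G)"
    by (rule ident2)
  also have "\<dots> \<ge> -c/2 + (x/p - x powr p)" using 1 a kid[OF p, of x, folded G] by argo
  finally show ?thesis using h_lo[OF p m T] c by linarith
qed


lemma ev_small:
  fixes e :: "real \<Rightarrow> real"
  assumes "(e \<longlongrightarrow> 0) at_top" "c > 0" shows "\<exists>Y. \<forall>y\<ge>Y. \<bar>e y\<bar> < c"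
proof -
  have "eventually (\<lambda>y. dist (e y) 0 < c) at_top" using assms tendsto_iff by blast
  then show ?thesis unfolding eventually_at_top_linorder by (simp add: dist_real_def)
qed

lemma core:
  fixes p C A K :: real and v w e :: "real \<Rightarrow> real"
  assumes p: "p > 1" and C: "C > 0" and A: "A > 0" and K: "K > 0"
   and dv: "\<And>y. y > A \<Longrightarrow> (v has_real_derivative K * (w y - v y) / y) (at y)"
   and cw: "continuous_on {A<..} w"
   and wC: "\<And>y. y > A \<Longrightarrow> w y \<ge> C"
   and eq: "\<And>y. y > A \<Longrightarrow> e y = w y/2 - w y powr p - (p-2)/(2*p) * v y"
   and e0: "(e \<longlongrightarrow> 0) at_top"
  shows "(v \<longlongrightarrow> p powr (-(1/(p-1)))) at_top"
proof -
  define vs where "vs = p powr (-(1/(p-1)))"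
  have vs0: "vs > 0" using p by (simp add: vs_def)
  have vsp: "vs powr (p-1) = 1/p"
  proof -
    have "vs powr (p-1) = p powr (-(1/(p-1)) * (p-1))" unfolding vs_def by (rule powr_powr)
    also have "-(1/(p-1)) * (p-1) = -1" using p by (simp add: field_simps)
    finally show ?thesis using p by (simp add: powr_minus divide_inverse)
  qed
  define D where "D = (\<lambda>y. K * (w y - v y) / y)"
  define Y0 where "Y0 = A + 1"
  have Y0: "Y0 > 0" "Y0 > A" using A by (auto simp: Y0_def)
  have d: "\<And>y. y \<ge> Y0 \<Longrightarrow> (v has_real_derivative D y) (at y)" using dv Y0 unfolding D_def by auto
  have Dpos: "D y > 0" if "y > 0" "w y > v y" for y using that K unfolding D_def by simp
  have Dneg: "D y < 0" if "y > 0" "w y < v y" for y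
    using that K unfolding D_def by (simp add: divide_neg_pos mult_pos_neg)
  have Dle: "D y \<le> - (K * \<eta>) / y" if "y > 0" "w y - v y \<le> - \<eta>" for y \<eta>
  proof -
    have "K * (w y - v y) \<le> K * (- \<eta>)" using that K by (intro mult_left_mono) auto
    then have "K * (w y - v y) / y \<le> K * (- \<eta>) / y" using that by (intro divide_right_mono) auto
    then show ?thesis unfolding D_def by simp
  qed
  have Dge: "D y \<ge> (K * \<eta>) / y" if "y > 0" "w y - v y \<ge> \<eta>" for y \<eta>
  proof -
    have "K * (w y - v y) \<ge> K * \<eta>" using that K by (intro mult_left_mono) auto
    then show ?thesis unfolding D_def using that by (simp add: divide_right_mono)
  qed

  have low1: "\<exists>Y. \<forall>y\<ge>Y. v y \<ge> C/2"
  proof (rule trap_up[OF Y0(1) d])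
    fix y assume "y \<ge> Y0" "v y \<le> C/2"
    then show "D y > 0" using wC[of y] C Y0 by (intro Dpos) auto
  next
    fix M
    show "\<exists>\<eta>>0. \<exists>Y'. \<forall>y\<ge>Y'. M \<le> v y \<and> v y \<le> C/2 \<longrightarrow> D y \<ge> \<eta> / y"
    proof (rule exI[of _ "K*(C/2)"], intro conjI exI[of _ Y0] allI impI)
      show "K*(C/2) > 0" using K C by simp
      fix y assume "y \<ge> Y0" "M \<le> v y \<and> v y \<le> C/2"
      then show "K*(C/2)/y \<le> D y" using wC[of y] Y0 by (intro Dge) auto
    qed
  qed

  have up: "\<exists>Y. \<forall>y\<ge>Y. v y \<le> T" if T: "T > vs" for T
  proof -
    have T0: "T > 0" using vs0 T by simp
    have "vs powr (p-1) < T powr (p-1)" using T vs0 p by (intro powr_less_mono2) auto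
    then have Tp: "1/p < T powr (p-1)" using vsp by simp
    define c where "c = T * (T powr (p-1) - 1/p)"
    have c0: "c > 0" using T0 Tp by (simp add: c_def)
    obtain Y1 where Y1: "\<And>y. y \<ge> Y1 \<Longrightarrow> \<bar>e y\<bar> < c/2" using ev_small[OF e0, of "c/2"] c0 by auto
    define Y where "Y = max Y0 Y1"
    have Y: "Y \<ge> Y0" "Y \<ge> Y1" "Y > 0" "Y > A" using Y0 by (auto simp: Y_def)
    have a': "w y < v y" if "y \<ge> Y" "v y \<ge> T" for y
    proof (rule ccontr)
      assume "\<not> w y < v y"
      then have "w y \<ge> v y" by simp
      from up_a[OF p T0 Tp that(2) this refl]
      have "w y/2 - w y powr p - (p-2)/(2*p) * v y \<le> -c" unfolding c_def .
      then have "e y \<le> -c" using eq[of y] that Y by simp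
      then show False using Y1[of y] that Y c0 by simp
    qed
    show ?thesis
    proof (rule trap_down[OF Y(3), where f' = D])
      fix y assume "y \<ge> Y" then show "(v has_real_derivative D y) (at y)" using d Y by auto
    next
      fix y assume "y \<ge> Y" "T \<le> v y" then show "D y < 0" using a' Y by (intro Dneg) auto
    next
      fix M
      define M' where "M' = max M T"
      define \<eta>0 where "\<eta>0 = min 1 (c / (2 * p * M' powr (p-1)))"
      have M'p: "M' powr (p-1) > 0" using T0 by (simp add: M'_def)
      have \<eta>0: "\<eta>0 > 0" "\<eta>0 \<le> c / (2 * p * M' powr (p-1))" using c0 p M'p by (auto simp: \<eta>0_def)
      show "\<exists>\<eta>>0. \<exists>Y'. \<forall>y\<ge>Y'. T \<le> v y \<and> v y \<le> M \<longrightarrow> D y \<le> - \<eta> / y"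
      proof (rule exI[of _ "K*\<eta>0"], intro conjI exI[of _ Y] allI impI)
        show "K*\<eta>0 > 0" using K \<eta>0 by simp
        fix y assume y: "y \<ge> Y" "T \<le> v y \<and> v y \<le> M"
        have "w y \<le> v y - \<eta>0"
        proof (rule ccontr)
          assume "\<not> ?thesis"
          then have "v y - w y < \<eta>0" by simp
          moreover have "w y < v y" using a' y by auto
          moreover have "0 < w y" using wC[of y] C y Y by force
          moreover have "v y \<le> M'" using y by (auto simp: M'_def)
          ultimately have "w y/2 - w y powr p - (p-2)/(2*p) * v y \<le> - c/2"
            using up_b[OF p T0 Tp _ _ _ _ _ c_def \<eta>0(2) refl] y by auto
          then have "e y \<le> -c/2" using eq[of y] y Y by simp
          then show False using Y1[of y] y Y by simp
        qed
        then show "D y \<le> - (K*\<eta>0) / y" using y Y by (intro Dle) auto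
      qed
    qed
  qed

  have lo: "\<exists>Y. \<forall>y\<ge>Y. v y \<ge> T" if T: "T < vs" for T
  proof (cases "T \<le> C/2")
    case True
    then show ?thesis using low1 by force
  next
    case False
    then have T1: "C/2 < T" by simp
    have T0: "T > 0" using C T1 by simp
    have "T powr (p-1) < vs powr (p-1)" using T T0 p by (intro powr_less_mono2) auto
    then have Tp: "T powr (p-1) < 1/p" using vsp by simp
    define m where "m = C/2"
    have m0: "m > 0" using C by (simp add: m_def)
    define c where "c = m * (1/p - T powr (p-1))"
    have c0: "c > 0" using m0 Tp by (simp add: c_def)
    obtain Y1 where Y1: "\<And>y. y \<ge> Y1 \<Longrightarrow> \<bar>e y\<bar> < c/2" using ev_small[OF e0, of "c/2"] c0 by auto
    obtain Y2 where Y2: "\<And>y. y \<ge> Y2 \<Longrightarrow> v y \<ge> m" using low1 unfolding m_def by auto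
    define Y where "Y = max Y0 (max Y1 Y2)"
    have Y: "Y \<ge> Y0" "Y \<ge> Y1" "Y \<ge> Y2" "Y > 0" "Y > A" using Y0 by (auto simp: Y_def)
    have dich: "w y > v y \<or> w y \<le> v y - c" if "y \<ge> Y" "v y \<le> T" for y
    proof (rule ccontr)
      assume "\<not> ?thesis"
      then have "v y - c < w y" "w y \<le> v y" by auto
      moreover have "0 < w y" using wC[of y] C that Y by force
      moreover have "m \<le> v y" using Y2[of y] that Y by simp
      ultimately have "w y/2 - w y powr p - (p-2)/(2*p) * v y > c/2"
        using lo_dich[OF p m0 _ that(2) Tp c_def _ _ _ refl] by auto
      then have "e y > c/2" using eq[of y] that Y by simp
      then show False using Y1[of y] that Y by simp
    qed
    show ?thesis
    proof (cases "\<exists>y0\<ge>Y. v y0 \<le> T \<and> w y0 \<le> v y0 - c")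
      case True
      then obtain y0 where y0: "y0 \<ge> Y" "v y0 \<le> T" "w y0 \<le> v y0 - c" by blast
      have neg: "w y - v y < -c/2" if "y \<ge> y0" for y
      proof (rule ccontr)
        assume nl: "\<not> ?thesis"
        define B where "B = {t \<in> {y0..y}. (\<lambda>_. -c/2) t \<le> w t - v t}"
        have contD: "continuous_on {y0..y} (\<lambda>t. w t - v t)"
        proof (intro continuous_on_diff)
          show "continuous_on {y0..y} w" using cw by (rule continuous_on_subset) (use y0 Y in auto)
          show "continuous_on {y0..y} v"
          proof (intro continuous_at_imp_continuous_on ballI)
            fix x assume "x \<in> {y0..y}"
            then have "x > A" using y0 Y by auto
            then show "isCont v x" using dv DERIV_isCont by blast
          qed
        qed
        have cB: "closed B" unfolding B_def
          by (rule continuous_on_closed_Collect_le[OF continuous_on_const contD closed_atLeastAtMost])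
        have "y \<in> B" using nl that by (auto simp: B_def)
        moreover have bB: "bdd_below B" unfolding B_def by (rule bdd_belowI[of _ y0]) auto
        ultimately have sB: "Inf B \<in> B" using cB closed_contains_Inf by blast
        define s where "s = Inf B"
        have s: "y0 \<le> s" "s \<le> y" "-c/2 \<le> w s - v s" using sB by (auto simp: B_def s_def)
        have "s \<noteq> y0" using s y0 c0 by auto
        then have ys: "y0 < s" using s by simp
        have below: "w t - v t < -c/2" if "y0 \<le> t" "t < s" for t
        proof (rule ccontr)
          assume "\<not> ?thesis"
          then have "t \<in> B" using that s by (auto simp: B_def)
          then have "s \<le> t" unfolding s_def using bB by (rule cInf_lower)
          then show False using that by simp
        qed
        obtain z where z: "y0 < z" "z < s" "v s - v y0 = (s - y0) * D z"
          using MVT2[OF ys, of v D] d y0 Y by force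
        have "D z < 0" using below[of z] z y0 Y c0 by (intro Dneg) auto
        then have "(s - y0) * D z < 0" using ys by (simp add: mult_pos_neg)
        then have "v s \<le> T" using z y0 by linarith
        then have "w s > v s \<or> w s \<le> v s - c" using dich[of s] s y0 by auto
        then have Ds: "w s - v s > 0" using s c0 by auto
        obtain t where t: "y0 \<le> t" "t \<le> s" "w t - v t = -c/2"
          using IVT'[of "\<lambda>t. w t - v t" y0 "-c/2" s] y0 s ys c0 Ds
            continuous_on_subset[OF contD, of "{y0..s}"] by force
        then have "t < s" using Ds c0 by (cases "t = s") auto
        then show False using below[of t] t by simp
      qed
      have y0pos: "y0 > 0" using y0 Y by simp
      have bnd: "v y \<le> v y0 - (K*(c/2)) * (ln y - ln y0)" if "y \<ge> y0" for y
      proof (rule log_decr[OF y0pos _ _ that])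
        fix x assume "x \<ge> y0"
        then show "(v has_real_derivative D x) (at x)" using d y0 Y by auto
        show "D x \<le> - (K*(c/2)) / x" using neg[of x] \<open>x \<ge> y0\<close> y0pos by (intro Dle) auto
      qed
      define y where "y = exp (ln y0 + 2 * \<bar>v y0\<bar> / (K*c) + 1)"
      have ypos: "y > 0" by (simp add: y_def)
      have "2 * \<bar>v y0\<bar> / (K*c) \<ge> 0" using K c0 by simp
      then have "ln y \<ge> ln y0" by (simp add: y_def)
      then have yy: "y \<ge> y0" using ypos y0pos ln_le_cancel_iff by blast
      have E: "(K*(c/2)) * (ln y - ln y0) = \<bar>v y0\<bar> + K*(c/2)" using K c0 by (simp add: y_def field_simps)
      have "v y \<le> v y0 - (K*(c/2)) * (ln y - ln y0)" by (rule bnd[OF yy])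
      then have "v y \<le> v y0 - (\<bar>v y0\<bar> + K*(c/2))" unfolding E .
      moreover have "K*(c/2) > 0" using K c0 by simp
      moreover have "v y0 \<le> \<bar>v y0\<bar>" by simp
      ultimately have "v y < 0" by linarith
      moreover have "v y \<ge> m" using Y2[of y] yy y0 Y by simp
      ultimately show ?thesis using m0 by simp
    next
      case False
      then have pos: "w y > v y" if "y \<ge> Y" "v y \<le> T" for y using dich[OF that] that by force
      show ?thesis
      proof (rule trap_up[OF Y(4), where f' = D])
        fix y assume "y \<ge> Y" then show "(v has_real_derivative D y) (at y)" using d Y by auto
      next
        fix y assume "y \<ge> Y" "v y \<le> T" then show "D y > 0" using pos Y by (intro Dpos) auto
      next
        fix M
        define \<eta>0 where "\<eta>0 = min 1 (c / (2 * p * (T+1) powr (p-1)))"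
        have Tp1: "(T+1) powr (p-1) > 0" using T0 by simp
        have \<eta>0: "\<eta>0 > 0" "\<eta>0 \<le> 1" "\<eta>0 \<le> c / (2 * p * (T+1) powr (p-1))"
          using c0 p Tp1 by (auto simp: \<eta>0_def)
        show "\<exists>\<eta>>0. \<exists>Y'. \<forall>y\<ge>Y'. M \<le> v y \<and> v y \<le> T \<longrightarrow> D y \<ge> \<eta> / y"
        proof (rule exI[of _ "K*\<eta>0"], intro conjI exI[of _ Y] allI impI)
          show "K*\<eta>0 > 0" using K \<eta>0 by simp
          fix y assume y: "y \<ge> Y" "M \<le> v y \<and> v y \<le> T"
          have "w y \<ge> v y + \<eta>0"
          proof (rule ccontr)
            assume "\<not> ?thesis"
            then have "w y < v y + \<eta>0" by simp
            moreover have "v y < w y" using pos y by auto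
            moreover have "m \<le> v y" using Y2[of y] y Y by simp
            ultimately have "w y/2 - w y powr p - (p-2)/(2*p) * v y \<ge> c/2"
              using lo_b[OF p m0 _ _ Tp c_def _ _ \<eta>0(2) \<eta>0(3) refl] y by auto
            then have "e y \<ge> c/2" using eq[of y] y Y by simp
            then show False using Y1[of y] y Y by simp
          qed
          then show "K*\<eta>0 / y \<le> D y" using y Y by (intro Dge) auto
        qed
      qed
    qed
  qed

  show ?thesis unfolding vs_def[symmetric]
  proof (rule order_tendstoI)
    fix a assume a: "a < vs"
    obtain Y where "\<forall>y\<ge>Y. v y \<ge> (a+vs)/2" using lo[of "(a+vs)/2"] a by auto
    then show "eventually (\<lambda>y. a < v y) at_top" unfolding eventually_at_top_linorder
      using a by (intro exI[of _ Y]) force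
  next
    fix a assume a: "a > vs"
    obtain Y where "\<forall>y\<ge>Y. v y \<le> (a+vs)/2" using up[of "(a+vs)/2"] a by auto
    then show "eventually (\<lambda>y. v y < a) at_top" unfolding eventually_at_top_linorder
      using a by (intro exI[of _ Y]) force
  qed
qed


theorem lemma7p5:
  fixes p A C \<sigma> :: real and \<phi> \<phi>' \<phi>'' :: "real \<Rightarrow> real"
  assumes p: "p > 1"
    and sigma: "\<sigma> \<in> {-1, 1}"
    and A: "A > 0"
    and d1: "\<And>y. y \<ge> A \<Longrightarrow> (\<phi> has_real_derivative \<phi>' y) (at y within {A..})"
    and d2: "\<And>y. y \<ge> A \<Longrightarrow> (\<phi>' has_real_derivative \<phi>'' y) (at y within {A..})"
    and cont2: "continuous_on {A..} \<phi>''"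
    and ode: "\<And>y. y \<ge> A \<Longrightarrow>
       \<sigma> * \<phi>'' y = (1/2) * y * \<phi>' y - ((p - 2) / (2 * (p - 1))) * \<phi> y - \<bar>\<phi>' y\<bar> powr p"
    and C: "C > 0"
    and lower: "\<And>y. y \<ge> A \<Longrightarrow> \<phi>' y \<ge> C * y powr (1 / (p - 1))"
    and small: "((\<lambda>y. \<bar>\<phi>'' y\<bar> / y powr (1 / (p - 1) + 1)) \<longlongrightarrow> 0) at_top"
  shows "((\<lambda>y. \<phi> y / y powr (1 / (p - 1) + 1)) \<longlongrightarrow> p powr (- (1 / (p - 1))) / (1 / (p - 1) + 1)) at_top"
proof -
  define \<beta> where "\<beta> = 1 / (p - 1)"
  define K where "K = \<beta> + 1"
  have \<beta>0: "\<beta> > 0" using p by (simp add: \<beta>_def)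
  have K0: "K > 0" using \<beta>0 by (simp add: K_def)
  have \<beta>p: "\<beta> * p = K" using p by (simp add: \<beta>_def K_def field_simps)
  define v where "v = (\<lambda>y. K * \<phi> y / y powr K)"
  define w where "w = (\<lambda>y. \<phi>' y / y powr \<beta>)"
  define e where "e = (\<lambda>y. \<sigma> * \<phi>'' y / y powr K)"
  have atw: "at y within {A..} = at y" if "y > A" for y
    using that by (intro at_within_interior) (simp add: interior_Ici[of "A - 1"])
  have D1: "(\<phi> has_real_derivative \<phi>' y) (at y)" if "y > A" for y
    using d1[of y] atw[OF that] that by simp
  have D2: "(\<phi>' has_real_derivative \<phi>'' y) (at y)" if "y > A" for y
    using d2[of y] atw[OF that] that by simp
  have yK: "y powr K = y * y powr \<beta>" if "y > 0" for y
  proof -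
    have "y powr K = y powr \<beta> * y powr 1" unfolding K_def by (rule powr_add)
    then show ?thesis using that by simp
  qed
  have dv: "(v has_real_derivative K * (w y - v y) / y) (at y)" if y: "y > A" for y
  proof -
    have y0: "y > 0" using y A by simp
    have "((\<lambda>y. K * \<phi> y / y powr K) has_real_derivative
        (K * \<phi>' y * y powr K - (K * y powr (K - 1)) * (K * \<phi> y)) / ((y powr K) ^ Suc (Suc 0))) (at y)"
      by (rule DERIV_quotient) (use D1[OF y] has_real_derivative_powr[OF y0] y0 in \<open>auto intro!: DERIV_cmult\<close>)
    moreover have "(K * \<phi>' y * y powr K - (K * y powr (K - 1)) * (K * \<phi> y)) / ((y powr K) ^ Suc (Suc 0))
        = K * (w y - v y) / y"
    proof -
      have "K - 1 = \<beta>" by (simp add: K_def)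
      moreover have "y powr \<beta> > 0" using y0 by simp
      ultimately show ?thesis unfolding w_def v_def using yK[OF y0] y0
        by (simp add: field_simps power2_eq_square)
    qed
    ultimately show ?thesis unfolding v_def by (rule DERIV_cong)
  qed
  have cw: "continuous_on {A<..} w"
  proof (intro continuous_at_imp_continuous_on ballI)
    fix y assume "y \<in> {A<..}"
    then have y: "y > A" and y0: "y > 0" using A by auto
    have "isCont \<phi>' y" using D2[OF y] by (rule DERIV_isCont)
    moreover have "isCont (\<lambda>y. y powr \<beta>) y" using has_real_derivative_powr[OF y0] by (rule DERIV_isCont)
    ultimately show "isCont w y" unfolding w_def using y0 by (intro isCont_divide) auto
  qed
  have wC: "w y \<ge> C" if "y > A" for y
  proof -
    have "y powr \<beta> > 0" using that A by simp
    then show ?thesis using lower[of y] that unfolding w_def \<beta>_def by (simp add: field_simps)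
  qed
  have eq: "e y = w y/2 - w y powr p - (p-2)/(2*p) * v y" if y: "y > A" for y
  proof -
    have y0: "y > 0" using y A by simp
    define P where "P = y powr \<beta>"
    have P0: "P > 0" using y0 by (simp add: P_def)
    have hw: "\<phi>' y = w y * P" unfolding w_def P_def using P0 P_def by simp
    have wpos: "w y > 0" using wC[OF y] C by simp
    have hv: "\<phi> y = v y * (y * P) / K" unfolding v_def P_def using yK[OF y0] K0 y0 P0 P_def by simp
    have Pp: "P powr p = y * P"
      unfolding P_def using yK[OF y0] y0 by (simp add: powr_powr \<beta>p)
    have abs: "\<bar>\<phi>' y\<bar> powr p = w y powr p * (y * P)"
      using hw wpos P0 by (simp add: powr_mult Pp)
    have "e y = \<sigma> * \<phi>'' y / (y * P)" unfolding e_def P_def using yK[OF y0] by simp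
    also have "\<dots> = ((1/2) * y * \<phi>' y - ((p - 2) / (2 * (p - 1))) * \<phi> y - \<bar>\<phi>' y\<bar> powr p) / (y * P)"
      using ode[of y] y by simp
    also have "\<dots> = ((1/2) * y * (w y * P) - ((p - 2) / (2 * (p - 1))) * (v y * (y * P) / K) - w y powr p * (y * P)) / (y * P)"
      using hw hv abs by simp
    also have "\<dots> = w y/2 - w y powr p - (p-2)/(2*p) * v y"
      using P0 y0 p unfolding K_def \<beta>_def by (simp add: field_simps)
    finally show ?thesis .
  qed
  have e0: "(e \<longlongrightarrow> 0) at_top"
  proof -
    have "(\<lambda>y. \<bar>e y\<bar>) = (\<lambda>y. \<bar>\<phi>'' y\<bar> / y powr (1 / (p - 1) + 1))"
    proof
      fix y
      have "\<bar>\<sigma>\<bar> = 1" using sigma by auto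
      then show "\<bar>e y\<bar> = \<bar>\<phi>'' y\<bar> / y powr (1 / (p - 1) + 1)"
        unfolding e_def K_def \<beta>_def by (simp add: abs_mult)
    qed
    then show ?thesis using small tendsto_rabs_zero_iff[of e at_top] by simp
  qed
  have lim: "(v \<longlongrightarrow> p powr (-(1/(p-1)))) at_top"
    by (rule core[OF p C A K0 dv cw wC eq e0])
  have "((\<lambda>y. v y / K) \<longlongrightarrow> p powr (-(1/(p-1))) / K) at_top"
    using lim K0 by (intro tendsto_divide tendsto_const) auto
  moreover have "(\<lambda>y. v y / K) = (\<lambda>y. \<phi> y / y powr K)" using K0 by (auto simp: v_def)
  ultimately show ?thesis unfolding K_def \<beta>_def by simp
qed

end
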